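(* Let $T$ be an anonymous and reasonable cardinal comparison test. If $T\not\sim\mathcal D$, then $T$ is not error-free. (In fact, if $T\not\sim_{\vec f}\mathcal D$ for a pair $\vec f$, then $T$ violates error-freeness.)
   Context: Let $\Omega=\{0,1\}$, $\Omega^\infty$ the set of infinite sequences $\omega=(\omega_1,\omega_2,\dots)$, and $\omega^t=(\omega_1,\dots,\omega_t)$ (also used for the cylinder set of all sequences with this prefix; $\omega^0=\emptyset$). $\mathcal G_t$ is the $\sigma$-algebra generated by the length-$t$ cylinders and $\mathcal G_\infty$ the $\sigma$-algebra generated by all cylinders. $\Delta(\Omega)$ is the set of probability distributions on $\Omega$; for $p\in\Delta(\Omega)$ and $x\in\Omega$, $p[x]$ is the probability of $x$. A forecasting strategy is a map $f:\bigcup_{t\ge0}(\Omega\times\Delta(\Omega)\times\Delta(\Omega))^t\to\Delta(\Omega)$; $F$ is the set of all forecasting strategies. Given an ordered pair $\vec f=(f,g)\in F\times F$ and $\omega\in\Omega^\infty$, the play path $(\omega,\vec f)$ is defined recursively: $(\omega,\vec f)^0=\emptyset$ and its $t$-th entry is $(\omega_t,f((\omega,\vec f)^{t-1}),g((\omega,\vec f)^{t-1}))$. The pair $\vec f$ induces two probability measures on $(\Omega^\infty,\mathcal G_\infty)$, again denoted $f$ and $g$, determined by $f(\omega^t)=\prod_{n=1}^t f((\omega,\vec f)^{n-1})[\omega_n]$ and $g(\omega^t)=\prod_{n=1}^t g((\omega,\vec f)^{n-1})[\omega_n]$. A (cardinal comparison) test is a sequence $T=(T_t)_{t>0}$ of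 $\mathcal G_t$-measurable functions $T_t:(\Omega\times\Delta(\Omega)\times\Delta(\Omega))^\infty\to[0,1]$; write $T_t(\omega,\vec f)=T_t((\omega,\vec f))$ and $T(\omega,\vec f)=\lim_t T_t(\omega,\vec f)$ whenever the limit exists. For $\epsilon\in(0,1)$ let $L^{\vec f}_{T,\epsilon}=\{\omega:T(\omega,\vec f)\text{ exists and }>\epsilon\}$ and $R^{\vec f}_{T,\epsilon}=\{\omega:T(\omega,\vec f)\text{ exists and }<\epsilon\}$. $T$ is anonymous if $T_t(\omega,f,g)=1-T_t(\omega,g,f)$ for all $\omega$, $t>0$, $f,g\in F$. $T$ is error-free if for all $\vec f=(f,g)$ and measurable $A\subseteq\Omega^\infty$: for all $\epsilon\in(0,\frac12)$, $f(A\cap R^{\vec f}_{T,\epsilon})\le\frac{\epsilon}{1-\epsilon}g(A\cap R^{\vec f}_{T,\epsilon})$, and for all $\epsilon\in(\frac12,1)$, $g(A\cap L^{\vec f}_{T,\epsilon})\le\frac{1-\epsilon}{\epsilon}f(A\cap L^{\vec f}_{T,\epsilon})$. $T$ is reasonable if for all $\vec f=(f,g)$ and measurable $A$: for $\epsilon\in(0,\frac12)$, if $g(A)>0$ and $f(A)<\frac{\epsilon}{1-\epsilon}g(A)$ then $g(A\cap R^{\vec f}_{T,\epsilon})>0$; and for $\epsilon\in(\frac12,1)$, if $f(A)>0$ and $g(A)<\frac{1-\epsilon}{\epsilon}f(A)$ then $f(A\cap L^{\vec f}_{T,\epsilon})>0$. The finite derivative test $\mathcal D$: for $t\ge0$,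 $\mathcal D_{t+1}(\omega,\vec f)=\frac{f(\omega^t)}{f(\omega^t)+g(\omega^t)}$ if $f(\omega^t)>0$ or $g(\omega^t)>0$, and $\frac12$ otherwise. Equivalence: $T\sim_{\vec f}\hat T$ if $f(N)=g(N)=0$ where $N=\{\omega: T(\omega,\vec f),\hat T(\omega,\vec f)\text{ both exist and differ}\}$; $T\sim\hat T$ if $T\sim_{\vec f}\hat T$ for all $\vec f\in F\times F$. *)

theory Defs
  imports "HOL-Probability.Probability"
begin

text \<open>Outcomes \<Omega> = {0,1} are represented by bool (True = 1), distributions
  \<Delta>(\<Omega>) by bool pmf, p[x] by pmf p x.  A history entry is
  (outcome, forecast of f, forecast of g); a finite history is a list of entries.\<close>

type_synonym entry = "bool \<times> bool pmf \<times> bool pmf"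
type_synonym strategy = "entry list \<Rightarrow> bool pmf"

text \<open>Infinite sequences \<omega> = (\<omega>_1, \<omega>_2, ...) are functions nat => bool with
  \<omega>_(n+1) = \<omega> n (0-indexed).  play w f g t is the length-t prefix (\<omega>,f,g)^t
  of the play path.\<close>

fun play :: "(nat \<Rightarrow> bool) \<Rightarrow> strategy \<Rightarrow> strategy \<Rightarrow> nat \<Rightarrow> entry list" where
  "play w f g 0 = []"
| "play w f g (Suc n) = (let h = play w f g n in h @ [(w n, f h, g h)])"

definition seq_space :: "(nat \<Rightarrow> bool) measure" where
  "seq_space = PiM UNIV (\<lambda>_. count_space UNIV)"

definition cyl :: "(nat \<Rightarrow> bool) \<Rightarrow> nat \<Rightarrow> (nat \<Rightarrow> bool) set" where
  "cyl w t = {v. \<forall>i<t. v i = w i}"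

definition induced_fst :: "(nat \<Rightarrow> bool) measure \<Rightarrow> strategy \<Rightarrow> strategy \<Rightarrow> bool" where
  "induced_fst M f g \<longleftrightarrow> prob_space M \<and> sets M = sets seq_space \<and>
     (\<forall>w t. measure M (cyl w t) = (\<Prod>n<t. pmf (f (play w f g n)) (w n)))"

definition induced_snd :: "(nat \<Rightarrow> bool) measure \<Rightarrow> strategy \<Rightarrow> strategy \<Rightarrow> bool" where
  "induced_snd M f g \<longleftrightarrow> prob_space M \<and> sets M = sets seq_space \<and>
     (\<forall>w t. measure M (cyl w t) = (\<Prod>n<t. pmf (g (play w f g n)) (w n)))"

text \<open>A test: T t h is T_t evaluated on a play path whose length-t prefix is h
  (G_t-measurability = dependence only on the first t entries). Only t > 0 matters.\<close>

type_synonym test = "nat \<Rightarrow> entry list \<Rightarrow> real"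

definition is_test :: "test \<Rightarrow> bool" where
  "is_test T \<longleftrightarrow> (\<forall>t h. 0 < t \<longrightarrow> 0 \<le> T t h \<and> T t h \<le> 1)"

definition test_seq :: "test \<Rightarrow> (nat \<Rightarrow> bool) \<Rightarrow> strategy \<Rightarrow> strategy \<Rightarrow> nat \<Rightarrow> real" where
  "test_seq T w f g t = T (Suc t) (play w f g (Suc t))"

definition L_set :: "test \<Rightarrow> strategy \<Rightarrow> strategy \<Rightarrow> real \<Rightarrow> (nat \<Rightarrow> bool) set" where
  "L_set T f g e = {w. \<exists>L. test_seq T w f g \<longlonglongrightarrow> L \<and> L > e}"

definition R_set :: "test \<Rightarrow> strategy \<Rightarrow> strategy \<Rightarrow> real \<Rightarrow> (nat \<Rightarrow> bool) set" where
  "R_set T f g e = {w. \<exists>L. test_seq T w f g \<longlonglongrightarrow> L \<and> L < e}"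

definition anonymous :: "test \<Rightarrow> bool" where
  "anonymous T \<longleftrightarrow> (\<forall>w t f g. 0 < t \<longrightarrow> T t (play w f g t) = 1 - T t (play w g f t))"

definition error_free :: "test \<Rightarrow> bool" where
  "error_free T \<longleftrightarrow> (\<forall>f g Mf Mg A. induced_fst Mf f g \<longrightarrow> induced_snd Mg f g \<longrightarrow>
      A \<in> sets seq_space \<longrightarrow>
      (\<forall>e. 0 < e \<and> e < 1/2 \<longrightarrow>
         measure Mf (A \<inter> R_set T f g e) \<le> e / (1 - e) * measure Mg (A \<inter> R_set T f g e)) \<and>
      (\<forall>e. 1/2 < e \<and> e < 1 \<longrightarrow>
         measure Mg (A \<inter> L_set T f g e) \<le> (1 - e) / e * measure Mf (A \<inter> L_set T f g e)))"

definition reasonable :: "test \<Rightarrow> bool" where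
  "reasonable T \<longleftrightarrow> (\<forall>f g Mf Mg A. induced_fst Mf f g \<longrightarrow> induced_snd Mg f g \<longrightarrow>
      A \<in> sets seq_space \<longrightarrow>
      (\<forall>e. 0 < e \<and> e < 1/2 \<longrightarrow> measure Mg A > 0 \<longrightarrow>
         measure Mf A < e / (1 - e) * measure Mg A \<longrightarrow>
         measure Mg (A \<inter> R_set T f g e) > 0) \<and>
      (\<forall>e. 1/2 < e \<and> e < 1 \<longrightarrow> measure Mf A > 0 \<longrightarrow>
         measure Mg A < (1 - e) / e * measure Mf A \<longrightarrow>
         measure Mf (A \<inter> L_set T f g e) > 0))"

text \<open>Finite derivative test: D_(t+1) uses the first t entries of the path.\<close>

definition D_test :: test where
  "D_test t h = (let h' = take (t - 1) h;
                     a = prod_list (map (\<lambda>(x, p, q). pmf p x) h');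
                     b = prod_list (map (\<lambda>(x, p, q). pmf q x) h')
                 in if a > 0 \<or> b > 0 then a / (a + b) else 1/2)"

definition equiv_on_pair :: "test \<Rightarrow> test \<Rightarrow> strategy \<Rightarrow> strategy \<Rightarrow> bool" where
  "equiv_on_pair T T' f g \<longleftrightarrow> (\<forall>Mf Mg. induced_fst Mf f g \<longrightarrow> induced_snd Mg f g \<longrightarrow>
     (let N = {w. \<exists>L L'. test_seq T w f g \<longlonglongrightarrow> L \<and> test_seq T' w f g \<longlonglongrightarrow> L' \<and> L \<noteq> L'}
      in measure Mf N = 0 \<and> measure Mg N = 0))"

definition test_equiv :: "test \<Rightarrow> test \<Rightarrow> bool" where
  "test_equiv T T' \<longleftrightarrow> (\<forall>f g. equiv_on_pair T T' f g)"

end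

theory Submission imports Defs begin
lemma space_seq[simp]: "space seq_space = UNIV"
  by (simp add: seq_space_def space_PiM)
lemma cyl_sets[measurable]: "cyl s T \<in> sets seq_space"
proof -
  have "cyl s T = {v \<in> space seq_space. \<forall>i\<in>{..<T}. v i = s i}" by (auto simp: cyl_def)
  also have "\<dots> \<in> sets seq_space" unfolding seq_space_def by measurable
  finally show ?thesis .
qed
lemma sets_seq: "sets seq_space = sigma_sets UNIV (prod_algebra UNIV (\<lambda>_::nat. count_space (UNIV::bool set)))"
  by (simp add: seq_space_def sets_PiM)

definition invT :: "nat \<Rightarrow> (nat\<Rightarrow>bool) set \<Rightarrow> bool" where
  "invT T A \<longleftrightarrow> (\<forall>w v. (\<forall>i<T. w i = v i) \<longrightarrow> (w \<in> A \<longleftrightarrow> v \<in> A))"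

definition rr :: "nat \<Rightarrow> (nat\<Rightarrow>bool) \<Rightarrow> (nat\<Rightarrow>bool)" where
  "rr T w = (\<lambda>i. if i < T then w i else False)"

lemma cyl_rr[simp]: "cyl (rr T w) T = cyl w T"
  by (auto simp: cyl_def rr_def)

lemma finite_rr: "finite (rr T ` A)"
proof -
  have "rr T ` A \<subseteq> (\<lambda>xs i. if i < T then xs ! i else False) ` {xs. length xs = T}"
  proof
    fix x assume "x \<in> rr T ` A"
    then obtain w where x: "x = rr T w" by auto
    have "x = (\<lambda>xs i. if i < T then xs ! i else False) (map w [0..<T])"
      using x by (auto simp: rr_def fun_eq_iff)
    then show "x \<in> (\<lambda>xs i. if i < T then xs ! i else False) ` {xs. length xs = T}" by force
  qed
  moreover have "finite {xs::bool list. length xs = T}"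
    using finite_lists_length_eq[of "UNIV::bool set" T] by simp
  ultimately show ?thesis by (meson finite_imageI finite_subset)
qed

lemma inv_union: assumes "invT T A" shows "A = (\<Union>s\<in>rr T ` A. cyl s T)"
proof
  show "A \<subseteq> (\<Union>s\<in>rr T ` A. cyl s T)"
  proof
    fix w assume "w \<in> A"
    moreover have "w \<in> cyl (rr T w) T" by (simp add: cyl_def rr_def)
    ultimately show "w \<in> (\<Union>s\<in>rr T ` A. cyl s T)" by auto
  qed
  show "(\<Union>s\<in>rr T ` A. cyl s T) \<subseteq> A"
  proof
    fix v assume "v \<in> (\<Union>s\<in>rr T ` A. cyl s T)"
    then obtain w where "w \<in> A" "v \<in> cyl w T" by auto
    then show "v \<in> A" using assms unfolding invT_def cyl_def by blast
  qed
qed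

lemma inv_sets: "invT T A \<Longrightarrow> A \<in> sets seq_space"
proof -
  assume a: "invT T A"
  have "(\<Union>s\<in>rr T ` A. cyl s T) \<in> sets seq_space"
    using finite_rr by (intro sets.finite_UN) auto
  then show ?thesis by (subst inv_union[OF a])
qed

lemma inv_mono: "invT T A \<Longrightarrow> T \<le> T' \<Longrightarrow> invT T' A"
  unfolding invT_def
proof (intro allI impI)
  fix w v :: "nat \<Rightarrow> bool"
  assume a: "\<forall>w v. (\<forall>i<T. w i = v i) \<longrightarrow> (w \<in> A) = (v \<in> A)" "T \<le> T'" "\<forall>i<T'. w i = v i"
  then have "\<forall>i<T. w i = v i" by auto
  then show "(w \<in> A) = (v \<in> A)" using a(1) by blast
qed

lemma inv_measurable_fun:
  assumes "\<And>w v. (\<forall>i<T. w i = v i) \<Longrightarrow> u w = u v"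
  shows "u \<in> borel_measurable seq_space"
proof (rule measurableI)
  fix S :: "'a set"
  have "invT T (u -` S)" unfolding invT_def using assms by (metis vimage_eq)
  then show "u -` S \<inter> space seq_space \<in> sets seq_space" using inv_sets by simp
qed auto

lemma play_inv: "(\<forall>i<n. w i = v i) \<Longrightarrow> play w f g n = play v f g n"
  by (induction n) (auto simp: Let_def)

lemma test_seq_meas[measurable]: "(\<lambda>w. test_seq X w f g t) \<in> borel_measurable seq_space"
  unfolding test_seq_def
  by (rule inv_measurable_fun[of "Suc t"]) (metis play_inv)

lemma R_set_eq: "R_set X f g e = {w \<in> space seq_space. convergent (\<lambda>t. test_seq X w f g t) \<and> lim (\<lambda>t. test_seq X w f g t) < e}"
  unfolding R_set_def by (auto simp: convergent_def limI)
lemma L_set_eq: "L_set X f g e = {w \<in> space seq_space. convergent (\<lambda>t. test_seq X w f g t) \<and> lim (\<lambda>t. test_seq X w f g t) > e}"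
  unfolding L_set_def by (auto simp: convergent_def limI)

lemma conv_sets: "{x \<in> space seq_space. convergent (test_seq X x f g)} \<in> sets seq_space"
  using sets_Collect_Cauchy[of "\<lambda>t w. test_seq X w f g t", OF test_seq_meas]
  by (simp add: Cauchy_convergent_iff)
lemma lim_meas: "(\<lambda>x. lim (test_seq X x f g)) \<in> borel_measurable seq_space"
  using borel_measurable_lim_metric[of "\<lambda>t w. test_seq X w f g t", OF test_seq_meas] by simp

lemma R_set_sets[measurable]: "R_set X f g e \<in> sets seq_space"
proof -
  note [measurable] = lim_meas
  have "{x \<in> space seq_space. lim (test_seq X x f g) < e} \<in> sets seq_space" by measurable
  then have "{x \<in> space seq_space. convergent (test_seq X x f g)} \<inter> {x \<in> space seq_space. lim (test_seq X x f g) < e} \<in> sets seq_space"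
    using conv_sets by blast
  then show ?thesis unfolding R_set_eq by (simp add: Collect_conj_eq[symmetric] Int_def)
qed
lemma L_set_sets[measurable]: "L_set X f g e \<in> sets seq_space"
proof -
  note [measurable] = lim_meas
  have "{x \<in> space seq_space. e < lim (test_seq X x f g)} \<in> sets seq_space" by measurable
  then have "{x \<in> space seq_space. convergent (test_seq X x f g)} \<inter> {x \<in> space seq_space. e < lim (test_seq X x f g)} \<in> sets seq_space"
    using conv_sets by blast
  then show ?thesis unfolding L_set_eq by (simp add: Collect_conj_eq[symmetric] Int_def)
qed

definition sd :: "'a set \<Rightarrow> 'a set \<Rightarrow> 'a set" where
  "sd A B = (A - B) \<union> (B - A)"

lemma sd_sets[measurable]: "A \<in> sets M \<Longrightarrow> B \<in> sets M \<Longrightarrow> sd A B \<in> sets M"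
  unfolding sd_def by auto

lemma inv_Un: "invT T A \<Longrightarrow> invT T B \<Longrightarrow> invT T (A \<union> B)"
  unfolding invT_def by blast

lemma (in finite_measure) le3:
  "X \<subseteq> Y \<union> Z \<Longrightarrow> Y \<in> sets M \<Longrightarrow> Z \<in> sets M \<Longrightarrow> measure M X \<le> measure M Y + measure M Z"
  by (meson finite_measure_mono measure_Un_le sets.Un order_trans)

lemma dist_help: "dist (a::real) b < r \<Longrightarrow> b - a < r"
  using abs_ge_minus_self[of "a-b"] by (simp add: dist_real_def)

locale two = M1: prob_space M1 + M2: prob_space M2 for M1 M2 :: "(nat \<Rightarrow> bool) measure" +
  assumes s1: "sets M1 = sets seq_space" and s2: "sets M2 = sets seq_space"
begin

definition approx :: "(nat \<Rightarrow> bool) set \<Rightarrow> bool" where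
  "approx B \<longleftrightarrow> (\<forall>e>0. \<exists>T A. invT T A \<and> measure M1 (sd A B) < e \<and> measure M2 (sd A B) < e)"

lemma approx_Un:
  assumes B1: "B1 \<in> sets seq_space" and B2: "B2 \<in> sets seq_space"
    and a1: "approx B1" and a2: "approx B2"
  shows "approx (B1 \<union> B2)"
  unfolding approx_def
proof (intro allI impI)
  fix e :: real assume e: "e > 0"
  obtain T1 A1 where 1: "invT T1 A1" "measure M1 (sd A1 B1) < e/2" "measure M2 (sd A1 B1) < e/2"
    using a1 e unfolding approx_def by (meson half_gt_zero)
  obtain T2 A2 where 2: "invT T2 A2" "measure M1 (sd A2 B2) < e/2" "measure M2 (sd A2 B2) < e/2"
    using a2 e unfolding approx_def by (meson half_gt_zero)
  have i: "invT (max T1 T2) (A1 \<union> A2)"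
    using inv_mono[OF 1(1), of "max T1 T2"] inv_mono[OF 2(1), of "max T1 T2"] by (intro inv_Un) auto
  have sub: "sd (A1 \<union> A2) (B1 \<union> B2) \<subseteq> sd A1 B1 \<union> sd A2 B2" unfolding sd_def by blast
  have m: "sd A1 B1 \<in> sets seq_space" "sd A2 B2 \<in> sets seq_space"
    using sd_sets[OF inv_sets[OF 1(1)] B1] sd_sets[OF inv_sets[OF 2(1)] B2] by auto
  have "measure M1 (sd (A1 \<union> A2) (B1 \<union> B2)) < e"
    using M1.le3[OF sub] m 1 2 s1 by auto
  moreover have "measure M2 (sd (A1 \<union> A2) (B1 \<union> B2)) < e"
    using M2.le3[OF sub] m 1 2 s2 by auto
  ultimately show "\<exists>T A. invT T A \<and> measure M1 (sd A (B1 \<union> B2)) < e \<and> measure M2 (sd A (B1 \<union> B2)) < e"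
    using i by blast
qed

lemma approx_empty: "approx {}"
  unfolding approx_def
  by (intro allI impI exI[of _ 0] exI[of _ "{}"]) (auto simp: invT_def sd_def)

lemma approx_finite_UN:
  fixes B :: "nat \<Rightarrow> (nat \<Rightarrow> bool) set" and n :: nat
  assumes B: "\<And>i. B i \<in> sets seq_space" and a: "\<And>i. approx (B i)"
  shows "approx (\<Union>i<n. B i)"
proof (induction n)
  case 0 then show ?case using approx_empty by simp
next
  case (Suc n)
  have "approx (B n \<union> (\<Union>i<n. B i))"
    using B Suc a by (intro approx_Un) auto
  then show ?case by (simp add: lessThan_Suc)
qed

lemma approx_UN:
  fixes B :: "nat \<Rightarrow> (nat \<Rightarrow> bool) set"
  assumes B: "\<And>i. B i \<in> sets seq_space" and a: "\<And>i. approx (B i)"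
  shows "approx (\<Union>i. B i)"
  unfolding approx_def
proof (intro allI impI)
  fix e :: real assume e: "e > 0"
  define C where "C n = (\<Union>i<n. B i)" for n
  have Cs: "C n \<in> sets seq_space" for n unfolding C_def using B by auto
  have Us: "(\<Union>i. B i) \<in> sets seq_space" using B by auto
  have inc: "incseq C" unfolding C_def incseq_def by (intro allI impI UN_mono) auto
  have UC: "(\<Union>n. C n) = (\<Union>i. B i)" unfolding C_def by auto
  have lim1: "(\<lambda>n. measure M1 (C n)) \<longlonglongrightarrow> measure M1 (\<Union>i. B i)"
    using M1.finite_Lim_measure_incseq[of C] Cs inc s1 UC by auto
  have lim2: "(\<lambda>n. measure M2 (C n)) \<longlonglongrightarrow> measure M2 (\<Union>i. B i)"
    using M2.finite_Lim_measure_incseq[of C] Cs inc s2 UC by auto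
  have ev1: "eventually (\<lambda>n. measure M1 (\<Union>i. B i) - measure M1 (C n) < e/2) sequentially"
  proof -
    have "eventually (\<lambda>n. dist (measure M1 (C n)) (measure M1 (\<Union>i. B i)) < e/2) sequentially"
      using lim1 e unfolding tendsto_iff by (meson half_gt_zero)
    then show ?thesis by eventually_elim (rule dist_help)
  qed
  have ev2: "eventually (\<lambda>n. measure M2 (\<Union>i. B i) - measure M2 (C n) < e/2) sequentially"
  proof -
    have "eventually (\<lambda>n. dist (measure M2 (C n)) (measure M2 (\<Union>i. B i)) < e/2) sequentially"
      using lim2 e unfolding tendsto_iff by (meson half_gt_zero)
    then show ?thesis by eventually_elim (rule dist_help)
  qed
  obtain n where n1: "measure M1 (\<Union>i. B i) - measure M1 (C n) < e/2"
    and n2: "measure M2 (\<Union>i. B i) - measure M2 (C n) < e/2"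
    using eventually_conj[OF ev1 ev2] eventually_sequentially by auto
  have sub: "C n \<subseteq> (\<Union>i. B i)" unfolding C_def by auto
  have d1: "measure M1 ((\<Union>i. B i) - C n) < e/2"
    using M1.finite_measure_Diff[of "\<Union>i. B i" "C n"] Us Cs sub n1 s1 by auto
  have d2: "measure M2 ((\<Union>i. B i) - C n) < e/2"
    using M2.finite_measure_Diff[of "\<Union>i. B i" "C n"] Us Cs sub n2 s2 by auto
  have "approx (C n)" unfolding C_def using approx_finite_UN[OF B a] .
  then obtain T A where A: "invT T A" "measure M1 (sd A (C n)) < e/2" "measure M2 (sd A (C n)) < e/2"
    using e unfolding approx_def by (meson half_gt_zero)
  have sub2: "sd A (\<Union>i. B i) \<subseteq> sd A (C n) \<union> ((\<Union>i. B i) - C n)"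
    using sub unfolding sd_def by blast
  have m: "sd A (C n) \<in> sets seq_space" "(\<Union>i. B i) - C n \<in> sets seq_space"
    using sd_sets[OF inv_sets[OF A(1)] Cs] Cs Us by auto
  have "measure M1 (sd A (\<Union>i. B i)) < e"
    using M1.le3[OF sub2] m A d1 s1 by auto
  moreover have "measure M2 (sd A (\<Union>i. B i)) < e"
    using M2.le3[OF sub2] m A d2 s2 by auto
  ultimately show "\<exists>T A. invT T A \<and> measure M1 (sd A (\<Union>i. B i)) < e \<and> measure M2 (sd A (\<Union>i. B i)) < e"
    using A(1) by blast
qed

lemma approx_compl:
  assumes "approx B" shows "approx (UNIV - B)"
  unfolding approx_def
proof (intro allI impI)
  fix e :: real assume "e > 0"
  then obtain T A where A: "invT T A" "measure M1 (sd A B) < e" "measure M2 (sd A B) < e"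
    using assms unfolding approx_def by blast
  have "invT T (UNIV - A)" using A(1) unfolding invT_def by blast
  moreover have "sd (UNIV - A) (UNIV - B) = sd A B" unfolding sd_def by blast
  ultimately show "\<exists>T A. invT T A \<and> measure M1 (sd A (UNIV - B)) < e \<and> measure M2 (sd A (UNIV - B)) < e"
    using A by metis
qed

lemma approx_basic:
  assumes "a \<in> prod_algebra UNIV (\<lambda>_::nat. count_space (UNIV::bool set))"
  shows "approx a"
proof -
  obtain J E where a: "a = prod_emb UNIV (\<lambda>_::nat. count_space (UNIV::bool set)) J (\<Pi>\<^sub>E j\<in>J. E j)"
    and J: "finite J"
    using prod_algebraE[OF assms] by metis
  obtain T where T: "J \<subseteq> {..<T}" using finite_nat_bounded[OF J] by blast
  have "invT T a" unfolding invT_def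
  proof (intro allI impI)
    fix w v :: "nat \<Rightarrow> bool" assume "\<forall>i<T. w i = v i"
    then have "restrict w J = restrict v J" using T by (auto simp: restrict_def fun_eq_iff)
    then show "(w \<in> a) = (v \<in> a)" unfolding a prod_emb_def by auto
  qed
  moreover have "sd a a = {}" unfolding sd_def by auto
  ultimately show ?thesis unfolding approx_def by (metis measure_empty)
qed

lemma approx_all:
  assumes "B \<in> sets seq_space" shows "approx B"
proof -
  have "B \<in> sigma_sets UNIV (prod_algebra UNIV (\<lambda>_::nat. count_space (UNIV::bool set)))"
    using assms sets_seq by simp
  then show ?thesis
  proof (induction rule: sigma_sets.induct)
    case (Basic a) then show ?case by (rule approx_basic)
  next
    case Empty then show ?case by (rule approx_empty)
  next
    case (Compl a) then show ?case using approx_compl by blast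
  next
    case (Union A) then show ?case using approx_UN[of A] sets_seq by auto
  qed
qed

end

lemma cyl_eq: "(\<forall>i<t. w i = v i) \<Longrightarrow> cyl w t = cyl v t"
  unfolding cyl_def by auto

context two begin

lemma dens_n:
  assumes a: "a \<ge> 0" and b: "b \<ge> 0" and B: "B \<in> sets seq_space"
    and cond: "\<forall>w\<in>B. \<forall>t\<ge>n. b * measure M2 (cyl w t) \<le> a * measure M1 (cyl w t)"
  shows "b * measure M2 B \<le> a * measure M1 B"
proof (rule field_le_epsilon)
  fix e :: real assume e: "e > 0"
  define d where "d = e / (a + b + 1)"
  have d: "d > 0" using e a b by (simp add: d_def)
  have abd: "(a + b) * d \<le> e"
  proof -
    have "(a + b) * d \<le> (a + b + 1) * d" using d by simp
    also have "\<dots> = e" using a b by (simp add: d_def)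
    finally show ?thesis .
  qed
  obtain T A where A: "invT T A" "measure M1 (sd A B) < d" "measure M2 (sd A B) < d"
    using approx_all[OF B] d unfolding approx_def by blast
  define T' where "T' = max T n"
  have iA: "invT T' A" using inv_mono[OF A(1)] by (simp add: T'_def)
  have As: "A \<in> sets seq_space" using inv_sets[OF A(1)] .
  define S where "S = rr T' ` (A \<inter> B)"
  define A' where "A' = (\<Union>s\<in>S. cyl s T')"
  have fS: "finite S" unfolding S_def by (rule finite_rr)
  have disj: "disjoint_family_on (\<lambda>s. cyl s T') S"
    unfolding disjoint_family_on_def
  proof (intro ballI impI)
    fix s1 s2 assume s: "s1 \<in> S" "s2 \<in> S" "s1 \<noteq> s2"
    then obtain w1 w2 where w: "s1 = rr T' w1" "s2 = rr T' w2" unfolding S_def by auto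
    have "\<exists>i<T'. w1 i \<noteq> w2 i"
    proof (rule ccontr)
      assume "\<not> ?thesis"
      then have "s1 = s2" using w by (auto simp: rr_def fun_eq_iff)
      then show False using s by simp
    qed
    then obtain i where i: "i < T'" "w1 i \<noteq> w2 i" by blast
    show "cyl s1 T' \<inter> cyl s2 T' = {}"
      using i w by (auto simp: cyl_def rr_def)
  qed
  have A's: "A' \<in> sets seq_space" unfolding A'_def using fS by (intro sets.finite_UN) auto
  have m1: "measure M1 A' = (\<Sum>s\<in>S. measure M1 (cyl s T'))"
  proof -
    have "(\<lambda>s. cyl s T') ` S \<subseteq> sets M1" using cyl_sets s1 by (simp add: image_subset_iff)
    then show ?thesis unfolding A'_def by (rule M1.finite_measure_finite_Union[OF fS _ disj])
  qed
  have m2: "measure M2 A' = (\<Sum>s\<in>S. measure M2 (cyl s T'))"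
  proof -
    have "(\<lambda>s. cyl s T') ` S \<subseteq> sets M2" using cyl_sets s2 by (simp add: image_subset_iff)
    then show ?thesis unfolding A'_def by (rule M2.finite_measure_finite_Union[OF fS _ disj])
  qed
  have key: "b * measure M2 A' \<le> a * measure M1 A'"
  proof -
    have "b * measure M2 A' = (\<Sum>s\<in>S. b * measure M2 (cyl s T'))"
      by (simp add: m2 sum_distrib_left)
    also have "\<dots> \<le> (\<Sum>s\<in>S. a * measure M1 (cyl s T'))"
    proof (rule sum_mono)
      fix s assume "s \<in> S"
      then obtain w where w: "w \<in> B" "s = rr T' w" unfolding S_def by auto
      have "T' \<ge> n" by (simp add: T'_def)
      then show "b * measure M2 (cyl s T') \<le> a * measure M1 (cyl s T')"
        using cond w by auto
    qed
    also have "\<dots> = a * measure M1 A'" by (simp add: m1 sum_distrib_left)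
    finally show ?thesis .
  qed
  have sub1: "A' \<subseteq> A"
  proof
    fix v assume "v \<in> A'"
    then obtain w where w: "w \<in> A" "v \<in> cyl w T'" unfolding A'_def S_def by auto
    then show "v \<in> A" using iA unfolding invT_def cyl_def by blast
  qed
  have sub2: "A \<inter> B \<subseteq> A'"
  proof
    fix w assume "w \<in> A \<inter> B"
    moreover have "w \<in> cyl (rr T' w) T'" by (simp add: cyl_def rr_def)
    ultimately show "w \<in> A'" unfolding A'_def S_def by auto
  qed
  have BA: "B - A \<in> sets seq_space" "A - B \<in> sets seq_space" using As B by auto
  have sdB: "B - A \<subseteq> sd A B" "A - B \<subseteq> sd A B" unfolding sd_def by auto
  have sds: "sd A B \<in> sets seq_space" using As B by auto
  have "measure M1 (A - B) \<le> measure M1 (sd A B)"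
    using M1.finite_measure_mono[OF sdB(2)] sds s1 by simp
  then have c1: "measure M1 A' \<le> measure M1 B + d"
    using M1.le3[of A' B "A - B"] sub1 BA B s1 A(2) by fastforce
  have "measure M2 (B - A) \<le> measure M2 (sd A B)"
    using M2.finite_measure_mono[OF sdB(1)] sds s2 by simp
  then have c2: "measure M2 B \<le> measure M2 A' + d"
    using M2.le3[of B A' "B - A"] sub2 BA A's s2 A(3) by fastforce
  have c1': "a * measure M1 A' \<le> a * (measure M1 B + d)" using c1 a by (rule mult_left_mono)
  have "b * measure M2 B \<le> b * (measure M2 A' + d)" using c2 b by (rule mult_left_mono)
  also have "\<dots> = b * measure M2 A' + b * d" by (simp add: algebra_simps)
  also have "\<dots> \<le> a * measure M1 A' + b * d" using key by simp
  also have "\<dots> \<le> a * measure M1 B + (a + b) * d"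
    using c1' by (simp add: algebra_simps)
  also have "\<dots> \<le> a * measure M1 B + e" using abd by simp
  finally show "b * measure M2 B \<le> a * measure M1 B + e" .
qed

lemma dens:
  assumes a: "a \<ge> 0" and b: "b \<ge> 0" and B: "B \<in> sets seq_space"
    and cond: "\<forall>w\<in>B. \<exists>n. \<forall>t\<ge>n. b * measure M2 (cyl w t) \<le> a * measure M1 (cyl w t)"
  shows "b * measure M2 B \<le> a * measure M1 B"
proof -
  define P where "P w t \<longleftrightarrow> b * measure M2 (cyl w t) \<le> a * measure M1 (cyl w t)" for w t
  define C where "C n = B \<inter> (\<Inter>t. {w. n \<le> t \<longrightarrow> P w t})" for n
  have Ps: "{w. n \<le> t \<longrightarrow> P w t} \<in> sets seq_space" for n t
  proof (rule inv_sets[of t])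
    show "invT t {w. n \<le> t \<longrightarrow> P w t}" unfolding invT_def P_def
      by (metis (no_types, lifting) cyl_eq mem_Collect_eq)
  qed
  have Cs: "C n \<in> sets seq_space" for n
    unfolding C_def using Ps B sets.top[of seq_space] by (intro sets.Int sets.countable_INT'') auto
  have inc: "incseq C" unfolding incseq_def C_def by auto
  have UC: "(\<Union>n. C n) = B" using cond unfolding C_def P_def by auto
  have "\<And>n. b * measure M2 (C n) \<le> a * measure M1 (C n)"
    using Cs by (intro dens_n[OF a b]) (auto simp: C_def P_def)
  moreover have "(\<lambda>n. b * measure M2 (C n)) \<longlonglongrightarrow> b * measure M2 B"
    using M2.finite_Lim_measure_incseq[of C] Cs inc s2 UC by (auto intro!: tendsto_mult_left)
  moreover have "(\<lambda>n. a * measure M1 (C n)) \<longlonglongrightarrow> a * measure M1 B"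
    using M1.finite_Lim_measure_incseq[of C] Cs inc s1 UC by (auto intro!: tendsto_mult_left)
  ultimately show ?thesis by (intro LIMSEQ_le) auto
qed

end

lemma length_play[simp]: "length (play w f g t) = t"
  by (induction t) (auto simp: Let_def)

lemma play_Suc: "play w f g (Suc t) = play w f g t @ [(w t, f (play w f g t), g (play w f g t))]"
  by (simp add: Let_def)

lemma prod_play_f: "prod_list (map (\<lambda>(x, p, q). pmf p x) (play w f g t)) = (\<Prod>n<t. pmf (f (play w f g n)) (w n))"
  by (induction t) (auto simp: Let_def)

lemma prod_play_g: "prod_list (map (\<lambda>(x, p, q). pmf q x) (play w f g t)) = (\<Prod>n<t. pmf (g (play w f g n)) (w n))"
  by (induction t) (auto simp: Let_def)

lemma D_seq:
  assumes "induced_fst Mf f g" "induced_snd Mg f g"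
  shows "test_seq D_test w f g t =
    (if measure Mf (cyl w t) > 0 \<or> measure Mg (cyl w t) > 0
     then measure Mf (cyl w t) / (measure Mf (cyl w t) + measure Mg (cyl w t)) else 1/2)"
proof -
  have tk: "take t (play w f g (Suc t)) = play w f g t" by (simp add: Let_def)
  show ?thesis
    using assms unfolding test_seq_def D_test_def induced_fst_def induced_snd_def
    by (simp add: tk prod_play_f prod_play_g Let_def)
qed

lemma induced_two:
  assumes "induced_fst Mf f g" "induced_snd Mg f g"
  shows "two Mf Mg" "two Mg Mf"
  using assms unfolding induced_fst_def induced_snd_def two_def two_axioms_def by auto

lemma D_ev_gt:
  assumes "induced_fst Mf f g" "induced_snd Mg f g" and c: "0 < c" "c < 1"
    and w: "w \<in> L_set D_test f g c"
  shows "\<exists>n. \<forall>t\<ge>n. c * measure Mg (cyl w t) \<le> (1 - c) * measure Mf (cyl w t)"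
proof -
  obtain L where L: "test_seq D_test w f g \<longlonglongrightarrow> L" "L > c" using w unfolding L_set_def by auto
  have "eventually (\<lambda>t. test_seq D_test w f g t > c) sequentially"
    using L by (simp add: order_tendstoD(1))
  then obtain n where n: "\<forall>t\<ge>n. test_seq D_test w f g t > c" by (auto simp: eventually_sequentially)
  have "\<forall>t\<ge>n. c * measure Mg (cyl w t) \<le> (1 - c) * measure Mf (cyl w t)"
  proof (intro allI impI)
    fix t assume "n \<le> t"
    then have gt: "test_seq D_test w f g t > c" using n by auto
    define a where "a = measure Mf (cyl w t)"
    define b where "b = measure Mg (cyl w t)"
    have ab: "a \<ge> 0" "b \<ge> 0" by (simp_all add: a_def b_def)
    show "c * measure Mg (cyl w t) \<le> (1 - c) * measure Mf (cyl w t)"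
    proof (cases "a > 0 \<or> b > 0")
      case True
      then have pos: "a + b > 0" using ab by auto
      have "a / (a + b) > c" using gt True D_seq[OF assms(1,2)] by (simp add: a_def b_def)
      then have "a > c * (a + b)" using pos by (simp add: field_simps)
      then show ?thesis by (simp add: a_def[symmetric] b_def[symmetric] algebra_simps)
    next
      case False
      then have "a = 0" "b = 0" using ab by auto
      then show ?thesis by (simp add: a_def[symmetric] b_def[symmetric])
    qed
  qed
  then show ?thesis by blast
qed

lemma D_ev_lt:
  assumes "induced_fst Mf f g" "induced_snd Mg f g" and c: "0 < c" "c < 1"
    and w: "w \<in> R_set D_test f g c"
  shows "\<exists>n. \<forall>t\<ge>n. (1 - c) * measure Mf (cyl w t) \<le> c * measure Mg (cyl w t)"
proof -
  obtain L where L: "test_seq D_test w f g \<longlonglongrightarrow> L" "L < c" using w unfolding R_set_def by auto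
  have "eventually (\<lambda>t. test_seq D_test w f g t < c) sequentially"
    using L by (simp add: order_tendstoD(2))
  then obtain n where n: "\<forall>t\<ge>n. test_seq D_test w f g t < c" by (auto simp: eventually_sequentially)
  have "\<forall>t\<ge>n. (1 - c) * measure Mf (cyl w t) \<le> c * measure Mg (cyl w t)"
  proof (intro allI impI)
    fix t assume "n \<le> t"
    then have gt: "test_seq D_test w f g t < c" using n by auto
    define a where "a = measure Mf (cyl w t)"
    define b where "b = measure Mg (cyl w t)"
    have ab: "a \<ge> 0" "b \<ge> 0" by (simp_all add: a_def b_def)
    show "(1 - c) * measure Mf (cyl w t) \<le> c * measure Mg (cyl w t)"
    proof (cases "a > 0 \<or> b > 0")
      case True
      then have pos: "a + b > 0" using ab by auto
      have "a / (a + b) < c" using gt True D_seq[OF assms(1,2)] by (simp add: a_def b_def)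
      then have "a < c * (a + b)" using pos by (simp add: field_simps)
      then show ?thesis by (simp add: a_def[symmetric] b_def[symmetric] algebra_simps)
    next
      case False
      then have "a = 0" "b = 0" using ab by auto
      then show ?thesis by (simp add: a_def[symmetric] b_def[symmetric])
    qed
  qed
  then show ?thesis by blast
qed

lemma dens_L:
  assumes "induced_fst Mf f g" "induced_snd Mg f g" and c: "0 < c" "c < 1"
    and B: "B \<in> sets seq_space" "B \<subseteq> L_set D_test f g c"
  shows "c * measure Mg B \<le> (1 - c) * measure Mf B"
  using two.dens[OF induced_two(1)[OF assms(1,2)], of "1 - c" c B] c B D_ev_gt[OF assms(1,2) c] by auto

lemma dens_R:
  assumes "induced_fst Mf f g" "induced_snd Mg f g" and c: "0 < c" "c < 1"
    and B: "B \<in> sets seq_space" "B \<subseteq> R_set D_test f g c"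
  shows "(1 - c) * measure Mf B \<le> c * measure Mg B"
  using two.dens[OF induced_two(2)[OF assms(1,2)], of c "1 - c" B] c B D_ev_lt[OF assms(1,2) c] by auto

lemma H1:
  fixes q q' mf mg :: real
  assumes "0 < q" "q < q'" "q' < 1" "mf \<ge> 0" "mg \<ge> 0"
    and h1: "(1 - q) * mf \<le> q * mg" and h2: "q' * mg \<le> (1 - q') * mf"
  shows "mf = 0 \<and> mg = 0"
proof -
  have a: "(1 - q') * ((1 - q) * mf) \<le> (1 - q') * (q * mg)" using h1 assms by (intro mult_left_mono) auto
  have b: "(1 - q) * (q' * mg) \<le> (1 - q) * ((1 - q') * mf)" using h2 assms by (intro mult_left_mono) auto
  have "(q' - q) * mg \<le> 0" using a b by (simp add: algebra_simps)
  then have "mg = 0" using assms by (simp add: mult_le_0_iff)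
  then show ?thesis using h1 assms by (simp add: mult_le_0_iff)
qed

lemma H2:
  fixes e q' mf mg :: real
  assumes "0 < e" "e < q'" "q' < 1" "mf \<ge> 0" "mg \<ge> 0"
    and h2: "q' * mg \<le> (1 - q') * mf" and n: "\<not> (mf > 0 \<and> mg < (1 - e) / e * mf)"
  shows "mf = 0 \<and> mg = 0"
proof (cases "mf > 0")
  case True
  have "(1 - q') / q' < (1 - e) / e" using assms by (simp add: field_simps)
  then have "(1 - q') / q' * mf < (1 - e) / e * mf" using True by (rule mult_strict_right_mono)
  moreover have "mg \<le> (1 - q') / q' * mf" using h2 assms by (simp add: field_simps)
  ultimately show ?thesis using n True by linarith
next
  case False
  then have "mf = 0" using assms by simp
  then show ?thesis using h2 assms by (simp add: mult_le_0_iff)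
qed

lemma H3:
  fixes q e mf mg :: real
  assumes "0 < q" "q < e" "e < 1" "mf \<ge> 0" "mg \<ge> 0"
    and h1: "(1 - q) * mf \<le> q * mg" and n: "\<not> (mg > 0 \<and> mf < e / (1 - e) * mg)"
  shows "mf = 0 \<and> mg = 0"
proof (cases "mg > 0")
  case True
  have "q / (1 - q) < e / (1 - e)" using assms by (simp add: field_simps)
  then have "q / (1 - q) * mg < e / (1 - e) * mg" using True by (rule mult_strict_right_mono)
  moreover have "mf \<le> q / (1 - q) * mg" using h1 assms by (simp add: field_simps)
  ultimately show ?thesis using n True by linarith
next
  case False
  then have "mg = 0" using assms by simp
  then show ?thesis using h1 assms by (simp add: mult_le_0_iff)
qed

lemma null_cover:
  assumes M: "prob_space M" and sub: "N \<subseteq> (\<Union>i\<in>I. U i)" and I: "countable I"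
    and U: "\<And>i. i \<in> I \<Longrightarrow> U i \<in> sets M \<and> measure M (U i) = 0"
  shows "measure M N = 0"
proof -
  interpret prob_space M by (rule M)
  have "U i \<in> null_sets M" if "i \<in> I" for i
    using U[OF that] by (intro null_setsI) (auto simp: emeasure_eq_measure)
  then have UN: "(\<Union>i\<in>I. U i) \<in> null_sets M" by (intro null_sets_UN' I) auto
  show ?thesis
  proof (cases "N \<in> sets M")
    case True
    have "N \<in> null_sets M" by (rule null_sets_subset[OF UN True sub])
    then show ?thesis by (rule measure_eq_0_null_sets)
  next
    case False then show ?thesis by (rule measure_notin_sets)
  qed
qed

lemma T_lim_bounds:
  assumes "is_test T" "test_seq T w f g \<longlonglongrightarrow> L"
  shows "0 \<le> L \<and> L \<le> 1"
proof -
  have "\<And>t. 0 \<le> test_seq T w f g t \<and> test_seq T w f g t \<le> 1"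
    using assms(1) unfolding is_test_def test_seq_def by auto
  then show ?thesis using assms(2) by (meson LIMSEQ_le_const LIMSEQ_le_const2)
qed

lemma D_test_bounds: "0 \<le> D_test t h \<and> D_test t h \<le> 1"
proof -
  define a where "a = prod_list (map (\<lambda>(x, p, q). pmf p x) (take (t - 1) h))"
  define b where "b = prod_list (map (\<lambda>(x, p, q). pmf q x) (take (t - 1) h))"
  have a: "a \<ge> 0" unfolding a_def by (rule prod_list_nonneg) auto
  have b: "b \<ge> 0" unfolding b_def by (rule prod_list_nonneg) auto
  have "D_test t h = (if a > 0 \<or> b > 0 then a / (a + b) else 1/2)"
    unfolding D_test_def a_def b_def Let_def by simp
  then show ?thesis using a b by (auto simp: field_simps)
qed

lemma D_lim_bounds:
  assumes "test_seq D_test w f g \<longlonglongrightarrow> L"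
  shows "0 \<le> L \<and> L \<le> 1"
proof -
  have "\<And>t. 0 \<le> test_seq D_test w f g t \<and> test_seq D_test w f g t \<le> 1"
    unfolding test_seq_def using D_test_bounds by auto
  then show ?thesis using assms by (meson LIMSEQ_le_const LIMSEQ_le_const2)
qed

lemma RL_disj: "q \<le> e \<Longrightarrow> R_set X f g q \<inter> L_set X f g e = {}"
  unfolding R_set_def L_set_def using LIMSEQ_unique by fastforce

lemma B1_null:
  assumes tst: "is_test T" and rs: "reasonable T" and ef: "error_free T"
    and ind: "induced_fst Mf f g" "induced_snd Mg f g" and qq: "q < q'"
  defines "B \<equiv> R_set T f g q \<inter> L_set D_test f g q'"
  shows "measure Mf B = 0 \<and> measure Mg B = 0"
proof (cases "B = {}")
  case True then show ?thesis by simp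
next
  case False
  then obtain w where w: "w \<in> B" by auto
  then obtain Lt Ld where Lt: "test_seq T w f g \<longlonglongrightarrow> Lt" "Lt < q"
    and Ld: "test_seq D_test w f g \<longlonglongrightarrow> Ld" "Ld > q'"
    unfolding B_def R_set_def L_set_def by auto
  have q0: "0 < q" using T_lim_bounds[OF tst Lt(1)] Lt(2) by auto
  have q1: "q' < 1" using D_lim_bounds[OF Ld(1)] Ld(2) by auto
  have Bs: "B \<in> sets seq_space" unfolding B_def by auto
  have mf: "measure Mf B \<ge> 0" and mg: "measure Mg B \<ge> 0" by auto
  have dL: "q' * measure Mg B \<le> (1 - q') * measure Mf B"
    using dens_L[OF ind, of q' B] q0 qq q1 Bs unfolding B_def by auto
  show ?thesis
  proof (cases "q' \<le> 1/2")
    case True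
    have BR: "B \<inter> R_set T f g q = B" unfolding B_def by auto
    have "measure Mf (B \<inter> R_set T f g q) \<le> q / (1 - q) * measure Mg (B \<inter> R_set T f g q)"
      using ef ind Bs q0 qq True unfolding error_free_def by auto
    then have "measure Mf B \<le> q / (1 - q) * measure Mg B" using BR by simp
    then have "(1 - q) * measure Mf B \<le> q * measure Mg B" using q0 qq q1 by (simp add: field_simps)
    then show ?thesis using H1[OF q0 qq q1 mf mg _ dL] by blast
  next
    case False
    define e where "e = (max q (1/2) + q') / 2"
    have e: "1/2 < e" "e < 1" "q < e" "e < q'" "0 < e" using False q1 qq by (auto simp: e_def)
    have emp: "B \<inter> L_set T f g e = {}" unfolding B_def using RL_disj[of q e T f g] e by auto
    have "measure Mf B > 0 \<longrightarrow> measure Mg B < (1 - e) / e * measure Mf B \<longrightarrow>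
          measure Mf (B \<inter> L_set T f g e) > 0"
      using rs ind Bs e unfolding reasonable_def by auto
    then have "\<not> (measure Mf B > 0 \<and> measure Mg B < (1 - e) / e * measure Mf B)"
      using emp by auto
    then show ?thesis using H2[OF e(5) e(4) q1 mf mg dL] by blast
  qed
qed

lemma B2_null:
  assumes tst: "is_test T" and rs: "reasonable T" and ef: "error_free T"
    and ind: "induced_fst Mf f g" "induced_snd Mg f g" and qq: "q < q'"
  defines "B \<equiv> R_set D_test f g q \<inter> L_set T f g q'"
  shows "measure Mf B = 0 \<and> measure Mg B = 0"
proof (cases "B = {}")
  case True then show ?thesis by simp
next
  case False
  then obtain w where w: "w \<in> B" by auto
  then obtain Lt Ld where Ld: "test_seq D_test w f g \<longlonglongrightarrow> Ld" "Ld < q"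
    and Lt: "test_seq T w f g \<longlonglongrightarrow> Lt" "Lt > q'"
    unfolding B_def R_set_def L_set_def by auto
  have q0: "0 < q" using D_lim_bounds[OF Ld(1)] Ld(2) by auto
  have q1: "q' < 1" using T_lim_bounds[OF tst Lt(1)] Lt(2) by auto
  have Bs: "B \<in> sets seq_space" unfolding B_def by auto
  have mf: "measure Mf B \<ge> 0" and mg: "measure Mg B \<ge> 0" by auto
  have dR: "(1 - q) * measure Mf B \<le> q * measure Mg B"
    using dens_R[OF ind, of q B] q0 qq q1 Bs unfolding B_def by auto
  show ?thesis
  proof (cases "q < 1/2")
    case True
    define e where "e = (q + min q' (1/2)) / 2"
    have e: "0 < e" "e < 1/2" "q < e" "e < q'" "e < 1" using True q0 qq by (auto simp: e_def)
    have emp: "B \<inter> R_set T f g e = {}" unfolding B_def using RL_disj[of e q' T f g] e by auto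
    have "measure Mg B > 0 \<longrightarrow> measure Mf B < e / (1 - e) * measure Mg B \<longrightarrow>
          measure Mg (B \<inter> R_set T f g e) > 0"
      using rs ind Bs e unfolding reasonable_def by auto
    then have "\<not> (measure Mg B > 0 \<and> measure Mf B < e / (1 - e) * measure Mg B)"
      using emp by auto
    then show ?thesis using H3[OF q0 e(3) e(5) mf mg dR] by blast
  next
    case False
    have BL: "B \<inter> L_set T f g q' = B" unfolding B_def by auto
    have "measure Mg (B \<inter> L_set T f g q') \<le> (1 - q') / q' * measure Mf (B \<inter> L_set T f g q')"
      using ef ind Bs q1 qq False unfolding error_free_def by auto
    then have "measure Mg B \<le> (1 - q') / q' * measure Mf B" using BL by simp
    then have "q' * measure Mg B \<le> (1 - q') * measure Mf B" using q0 qq q1 by (simp add: field_simps)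
    then show ?thesis using H1[OF q0 qq q1 mf mg dR] by blast
  qed
qed

theorem mainTheorem7:
  fixes T :: test
  assumes "is_test T" and "anonymous T" and "reasonable T"
    and "\<not> test_equiv T D_test"
  shows "\<not> error_free T"
proof
  assume ef: "error_free T"
  obtain f g where ne: "\<not> equiv_on_pair T D_test f g" using assms(4) unfolding test_equiv_def by blast
  define N where "N = {w. \<exists>L L'. test_seq T w f g \<longlonglongrightarrow> L \<and> test_seq D_test w f g \<longlonglongrightarrow> L' \<and> L \<noteq> L'}"
  obtain Mf Mg where ind: "induced_fst Mf f g" "induced_snd Mg f g"
    and bad: "\<not> (measure Mf N = 0 \<and> measure Mg N = 0)"
    using ne unfolding equiv_on_pair_def N_def Let_def by blast
  define I where "I = {p :: real \<times> real. fst p \<in> \<rat> \<and> snd p \<in> \<rat> \<and> fst p < snd p}"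
  define U where "U p = (R_set T f g (fst p) \<inter> L_set D_test f g (snd p)) \<union>
                        (R_set D_test f g (fst p) \<inter> L_set T f g (snd p))" for p
  have cI: "countable I"
  proof (rule countable_subset)
    show "I \<subseteq> \<rat> \<times> \<rat>" unfolding I_def by auto
    show "countable (\<rat> \<times> (\<rat> :: real set))" by (intro countable_SIGMA; rule countable_rat)
  qed
  have sub: "N \<subseteq> (\<Union>p\<in>I. U p)"
  proof
    fix w assume "w \<in> N"
    then obtain L L' where L: "test_seq T w f g \<longlonglongrightarrow> L" "test_seq D_test w f g \<longlonglongrightarrow> L'" "L \<noteq> L'"
      unfolding N_def by blast
    show "w \<in> (\<Union>p\<in>I. U p)"
    proof (cases "L < L'")
      case True
      obtain q where q: "q \<in> \<rat>" "L < q" "q < L'" using Rats_dense_in_real[OF True] by blast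
      obtain q' where q': "q' \<in> \<rat>" "q < q'" "q' < L'" using Rats_dense_in_real[OF q(3)] by blast
      have "w \<in> U (q, q')" unfolding U_def R_set_def L_set_def using L q q' by auto
      moreover have "(q, q') \<in> I" unfolding I_def using q q' by auto
      ultimately show ?thesis by blast
    next
      case False
      then have lt: "L' < L" using L(3) by auto
      obtain q where q: "q \<in> \<rat>" "L' < q" "q < L" using Rats_dense_in_real[OF lt] by blast
      obtain q' where q': "q' \<in> \<rat>" "q < q'" "q' < L" using Rats_dense_in_real[OF q(3)] by blast
      have "w \<in> U (q, q')" unfolding U_def R_set_def L_set_def using L q q' by auto
      moreover have "(q, q') \<in> I" unfolding I_def using q q' by auto
      ultimately show ?thesis by blast
    qed
  qed
  have Us: "U p \<in> sets seq_space" for p unfolding U_def by auto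
  have Unull: "measure Mf (U p) = 0 \<and> measure Mg (U p) = 0" if "p \<in> I" for p
  proof -
    have qq: "fst p < snd p" using that unfolding I_def by auto
    note n1 = B1_null[OF assms(1) assms(3) ef ind qq]
    note n2 = B2_null[OF assms(1) assms(3) ef ind qq]
    have s: "sets Mf = sets seq_space" "sets Mg = sets seq_space"
      using ind unfolding induced_fst_def induced_snd_def by auto
    have "measure Mf (U p) \<le> 0"
      using measure_Un_le[of "R_set T f g (fst p) \<inter> L_set D_test f g (snd p)" Mf
          "R_set D_test f g (fst p) \<inter> L_set T f g (snd p)"] n1 n2 s unfolding U_def by auto
    moreover have "measure Mg (U p) \<le> 0"
      using measure_Un_le[of "R_set T f g (fst p) \<inter> L_set D_test f g (snd p)" Mg
          "R_set D_test f g (fst p) \<inter> L_set T f g (snd p)"] n1 n2 s unfolding U_def by auto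
    ultimately show ?thesis by (simp add: measure_le_0_iff)
  qed
  have pf: "prob_space Mf" "sets Mf = sets seq_space" using ind(1) unfolding induced_fst_def by auto
  have pg: "prob_space Mg" "sets Mg = sets seq_space" using ind(2) unfolding induced_snd_def by auto
  have "measure Mf N = 0" using null_cover[OF pf(1) sub cI] Unull Us pf(2) by auto
  moreover have "measure Mg N = 0" using null_cover[OF pg(1) sub cI] Unull Us pg(2) by auto
  ultimately show False using bad by simp
qed

end
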